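(* For all integers $m$ and $n$, \[ F_m \sum_{k = 1}^n ( - 1)^{mk - 1} L_{2mk} = ( - 1)^{mn - 1} F_{mn} L_{mn + m}\,. \]
   Context: $F_i$ and $L_i$ denote the Fibonacci and Lucas numbers, defined for all $i\in\mathbb{Z}$ by $F_i=F_{i-1}+F_{i-2}$, $F_0=0$, $F_1=1$, and $L_i=L_{i-1}+L_{i-2}$, $L_0=2$, $L_1=1$; equivalently $F_{-i}=(-1)^{i-1}F_i$ and $L_{-i}=(-1)^iL_i$. Summation convention for an arbitrary integer upper limit: $\sum_{k=a}^{a-1} f(k)=0$, and for $n<a-1$, $\sum_{k=a}^{n} f(k) = -\sum_{k=n+1}^{a-1} f(k)$. *)

theory Defs
  imports Main
begin

fun fibn :: "nat \<Rightarrow> int" where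
  "fibn 0 = 0" | "fibn (Suc 0) = 1" | "fibn (Suc (Suc n)) = fibn (Suc n) + fibn n"

fun lucn :: "nat \<Rightarrow> int" where
  "lucn 0 = 2" | "lucn (Suc 0) = 1" | "lucn (Suc (Suc n)) = lucn (Suc n) + lucn n"

definition negpow :: "int \<Rightarrow> int" where
  "negpow e = (if even e then 1 else -1)"

definition fibz :: "int \<Rightarrow> int" where
  "fibz i = (if 0 \<le> i then fibn (nat i) else negpow (- i - 1) * fibn (nat (- i)))"

definition lucz :: "int \<Rightarrow> int" where
  "lucz i = (if 0 \<le> i then lucn (nat i) else negpow (- i) * lucn (nat (- i)))"

definition isum :: "int \<Rightarrow> int \<Rightarrow> (int \<Rightarrow> int) \<Rightarrow> int" where
  "isum a n f = (if a - 1 \<le> n then (\<Sum>k\<in>{a..n}. f k) else - (\<Sum>k\<in>{n+1..a-1}. f k))"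

end

theory Submission
  imports Defs
begin

lemma negpow_add: "negpow (x + y) = negpow x * negpow y"
  by (auto simp: negpow_def)

lemma negpow_uminus: "negpow (- x) = negpow x"
  by (auto simp: negpow_def)

lemma negpow_diff: "negpow (x - y) = negpow x * negpow y"
  using negpow_add[of x "-y"] negpow_uminus[of y] by simp

lemma negpow_sq: "negpow x * negpow x = 1"
  by (auto simp: negpow_def)

lemma negpow_0: "negpow 0 = 1" and negpow_1: "negpow 1 = -1"
  by (auto simp: negpow_def)

lemma uniq:
  fixes g h :: "int \<Rightarrow> int"
  assumes g: "\<And>i. g (i+2) = g (i+1) + g i" and h: "\<And>i. h (i+2) = h (i+1) + h i"
    and "g 0 = h 0" "g 1 = h 1"
  shows "g i = h i"
proof -
  define d where "d i = g i - h i" for i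
  have d: "d (i+2) = d (i+1) + d i" for i using g[of i] h[of i] by (simp add: d_def)
  have d0: "d 0 = 0" "d 1 = 0" using assms(3,4) by (auto simp: d_def)
  have up: "d (int n) = 0 \<and> d (int n + 1) = 0" for n
  proof (induction n)
    case 0 then show ?case using d0 by simp
  next
    case (Suc n) then show ?case using d[of "int n"] by (simp add: add.commute add.left_commute)
  qed
  have dn: "d (- int n) = 0 \<and> d (1 - int n) = 0" for n
  proof (induction n)
    case 0 then show ?case using d0 by simp
  next
    case (Suc n)
    have "d (- int n - 1 + 2) = d (- int n - 1 + 1) + d (- int n - 1)" by (rule d)
    then have e: "d (- int n - 1) = 0" using Suc by (simp add: algebra_simps)
    have f: "- int (Suc n) = - int n - 1" "1 - int (Suc n) = - int n" by simp_all
    show ?case unfolding f using e Suc by simp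
  qed
  have "d i = 0"
  proof (cases "i \<ge> 0")
    case True then show ?thesis using up[of "nat i"] by simp
  next
    case False then show ?thesis using dn[of "nat (-i)"] by simp
  qed
  then show ?thesis by (simp add: d_def)
qed

lemma fibz_neg: "fibz (- int n) = negpow (int n - 1) * fibn n"
  by (cases n) (auto simp: fibz_def nat_add_distrib)

lemma lucz_neg: "lucz (- int n) = negpow (int n) * lucn n"
  by (cases n) (auto simp: lucz_def negpow_def nat_add_distrib)

lemma fibz_nat: "fibz (int n) = fibn n" by (simp add: fibz_def)
lemma lucz_nat: "lucz (int n) = lucn n" by (simp add: lucz_def)

lemma fibz_rec: "fibz (i+2) = fibz (i+1) + fibz i"
proof (cases "i \<ge> -1")
  case True
  then consider "i = -1" | k where "i = int k"
  proof -
    assume a: "i = -1 \<Longrightarrow> thesis" and b: "\<And>k. i = int k \<Longrightarrow> thesis"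
    show thesis
    proof (cases "i = -1")
      case True then show ?thesis by (rule a)
    next
      case False then have "i \<ge> 0" using \<open>i \<ge> -1\<close> by simp
      then show ?thesis using b nonneg_int_cases by blast
    qed
  qed
  then show ?thesis
  proof cases
    case 1 then show ?thesis by (simp add: fibz_def negpow_0)
  next
    case (2 k)
    have "i + 2 = int (Suc (Suc k))" "i + 1 = int (Suc k)" using 2 by simp_all
    then show ?thesis unfolding 2 fibz_nat by (simp only: fibz_nat) simp
  qed
next
  case False
  then have "- i - 2 \<ge> 0" by simp
  then obtain k where "- i - 2 = int k" using nonneg_int_cases by blast
  then have k: "i = - int (Suc (Suc k))" by simp
  have e: "i + 2 = - int k" "i + 1 = - int (Suc k)" using k by simp_all
  have b: "negpow (int k + 1) = - negpow (int k)"
    using negpow_add[of "int k" 1] negpow_1 by simp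
  have c: "negpow (int k - 1) = - negpow (int k)"
    using negpow_diff[of "int k" 1] negpow_1 by simp
  have f1: "fibz (i+2) = negpow (int k - 1) * fibn k" using e(1) fibz_neg[of k] by simp
  have f2: "fibz (i+1) = negpow (int k) * fibn (Suc k)" using k fibz_neg[of "Suc k"] by simp
  have f3: "fibz i = negpow (int k + 1) * fibn (Suc (Suc k))" using k fibz_neg[of "Suc (Suc k)"] by (simp add: add.commute)
  show ?thesis unfolding f1 f2 f3 using b c by (simp add: algebra_simps)
qed

lemma lucz_rec: "lucz (i+2) = lucz (i+1) + lucz i"
proof (cases "i \<ge> -1")
  case True
  then consider "i = -1" | k where "i = int k"
  proof -
    assume a: "i = -1 \<Longrightarrow> thesis" and b: "\<And>k. i = int k \<Longrightarrow> thesis"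
    show thesis
    proof (cases "i = -1")
      case True then show ?thesis by (rule a)
    next
      case False then have "i \<ge> 0" using \<open>i \<ge> -1\<close> by simp
      then show ?thesis using b nonneg_int_cases by blast
    qed
  qed
  then show ?thesis
  proof cases
    case 1 then show ?thesis by (simp add: lucz_def negpow_1)
  next
    case (2 k)
    have "i + 2 = int (Suc (Suc k))" "i + 1 = int (Suc k)" using 2 by simp_all
    then show ?thesis unfolding 2 lucz_nat by (simp only: lucz_nat) simp
  qed
next
  case False
  then have "- i - 2 \<ge> 0" by simp
  then obtain k where "- i - 2 = int k" using nonneg_int_cases by blast
  then have k: "i = - int (Suc (Suc k))" by simp
  have e: "i + 2 = - int k" "i + 1 = - int (Suc k)" using k by simp_all
  have b: "negpow (int k + 1) = - negpow (int k)"
    using negpow_add[of "int k" 1] negpow_1 by simp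
  have b2: "negpow (int k + 2) = negpow (int k)"
    using negpow_add[of "int k" 2] by (simp add: negpow_def)
  have f1: "lucz (i+2) = negpow (int k) * lucn k" using e(1) lucz_neg[of k] by simp
  have f2: "lucz (i+1) = negpow (int k + 1) * lucn (Suc k)" using k lucz_neg[of "Suc k"] by (simp add: add.commute)
  have f3: "lucz i = negpow (int k + 2) * lucn (Suc (Suc k))" using k lucz_neg[of "Suc (Suc k)"] by (simp add: add.commute)
  show ?thesis unfolding f1 f2 f3 using b b2 by (simp add: algebra_simps)
qed


lemma fibz_0: "fibz 0 = 0" and fibz_1: "fibz 1 = 1" and fibz_2: "fibz 2 = 1"
  and lucz_0: "lucz 0 = 2" and lucz_1: "lucz 1 = 1" and fibz_m1: "fibz (-1) = 1"
  by (simp_all add: fibz_def lucz_def negpow_def numeral_2_eq_2)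

lemma negpow_2: "negpow (x + 2) = negpow x" by (auto simp: negpow_def)
lemma negpow_p1: "negpow (x + 1) = - negpow x" by (auto simp: negpow_def)

lemma fibz_negate: "negpow i * fibz (- i) = - fibz i"
proof -
  have "negpow i * fibz (- i) = - fibz i"
  proof (rule uniq[where g="\<lambda>i. negpow i * fibz (- i)" and h="\<lambda>i. - fibz i"])
    fix i
    have "fibz (- i - 2 + 2) = fibz (- i - 2 + 1) + fibz (- i - 2)" by (rule fibz_rec)
    moreover have mm: "fibz (-1 - i) = fibz (- i - 1)" by (rule arg_cong[where f=fibz]) simp
    ultimately have "fibz (- i - 2) = fibz (- i) - fibz (- i - 1)" by (simp add: algebra_simps)
    moreover have "negpow (i + 2) = negpow i" "negpow (i + 1) = - negpow i"
      by (rule negpow_2, rule negpow_p1)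
    ultimately show "negpow (i + 2) * fibz (- (i + 2)) =
          negpow (i + 1) * fibz (- (i + 1)) + negpow i * fibz (- i)"
      using mm by (simp add: algebra_simps) (metis distrib_left)
  next
    fix i show "- fibz (i + 2) = - fibz (i + 1) + - fibz i" using fibz_rec[of i] by simp
  qed (simp_all add: fibz_0 fibz_1 fibz_m1 negpow_0 negpow_1)
  then show ?thesis by simp
qed

lemma A1: "lucz b = fibz (b + 1) + negpow b * fibz (1 - b)"
proof -
  have "lucz b = fibz (b + 1) + negpow b * fibz (1 - b)"
  proof (rule uniq[where g="\<lambda>b. lucz b" and h="\<lambda>b. fibz (b + 1) + negpow b * fibz (1 - b)"])
    fix i show "lucz (i + 2) = lucz (i + 1) + lucz i" by (rule lucz_rec)
  next
    fix i
    have "fibz (- i - 1 + 2) = fibz (- i - 1 + 1) + fibz (- i - 1)" by (rule fibz_rec)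
    moreover have "fibz (-1 - i) = fibz (- i - 1)" by (rule arg_cong[where f=fibz]) simp
    moreover have "fibz (i + 1 + 2) = fibz (i + 1 + 1) + fibz (i + 1)" by (rule fibz_rec)
    moreover have "negpow (i + 2) = negpow i" "negpow (i + 1) = - negpow i"
      by (rule negpow_2, rule negpow_p1)
    ultimately show "fibz (i + 2 + 1) + negpow (i + 2) * fibz (1 - (i + 2)) =
         fibz (i + 1 + 1) + negpow (i + 1) * fibz (1 - (i + 1)) + (fibz (i + 1) + negpow i * fibz (1 - i))"
      by (simp add: algebra_simps)
  qed (simp_all add: fibz_0 fibz_1 fibz_2 lucz_0 lucz_1 negpow_0 negpow_1)
  then show ?thesis by simp
qed

lemma A: "fibz a * lucz b = fibz (a + b) + negpow b * fibz (a - b)"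
proof -
  have "fibz a * lucz b = fibz (a + b) + negpow b * fibz (a - b)"
  proof (rule uniq[where g="\<lambda>a. fibz a * lucz b" and h="\<lambda>a. fibz (a + b) + negpow b * fibz (a - b)"])
    fix i show "fibz (i + 2) * lucz b = fibz (i + 1) * lucz b + fibz i * lucz b"
      using fibz_rec[of i] by (simp add: algebra_simps)
  next
    fix i
    have "fibz (i + b + 2) = fibz (i + b + 1) + fibz (i + b)" by (rule fibz_rec)
    moreover have "fibz (i - b + 2) = fibz (i - b + 1) + fibz (i - b)" by (rule fibz_rec)
    ultimately show "fibz (i + 2 + b) + negpow b * fibz (i + 2 - b) =
         fibz (i + 1 + b) + negpow b * fibz (i + 1 - b) + (fibz (i + b) + negpow b * fibz (i - b))"
      by (simp add: algebra_simps)
  next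
    show "fibz 0 * lucz b = fibz (0 + b) + negpow b * fibz (0 - b)"
      using fibz_negate[of b] by (simp add: fibz_0)
  next
    show "fibz 1 * lucz b = fibz (1 + b) + negpow b * fibz (1 - b)"
      using A1[of b] by (simp add: fibz_1 add.commute)
  qed
  then show ?thesis by simp
qed

lemma B1: "fibz (b + 1) - negpow b * fibz (1 - b) = fibz b"
proof -
  have "fibz (b + 1) - negpow b * fibz (1 - b) = fibz b"
  proof (rule uniq[where g="\<lambda>b. fibz (b + 1) - negpow b * fibz (1 - b)" and h="\<lambda>b. fibz b"])
    fix i
    have "fibz (- i - 1 + 2) = fibz (- i - 1 + 1) + fibz (- i - 1)" by (rule fibz_rec)
    moreover have "fibz (-1 - i) = fibz (- i - 1)" by (rule arg_cong[where f=fibz]) simp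
    moreover have "fibz (i + 1 + 2) = fibz (i + 1 + 1) + fibz (i + 1)" by (rule fibz_rec)
    moreover have "negpow (i + 2) = negpow i" "negpow (i + 1) = - negpow i"
      by (rule negpow_2, rule negpow_p1)
    ultimately show "fibz (i + 2 + 1) - negpow (i + 2) * fibz (1 - (i + 2)) =
         fibz (i + 1 + 1) - negpow (i + 1) * fibz (1 - (i + 1)) + (fibz (i + 1) - negpow i * fibz (1 - i))"
      by (simp add: algebra_simps)
  next
    fix i show "fibz (i + 2) = fibz (i + 1) + fibz i" by (rule fibz_rec)
  qed (simp_all add: fibz_0 fibz_1 fibz_2 negpow_0 negpow_1)
  then show ?thesis by simp
qed

lemma B: "fibz (a + b) - negpow b * fibz (a - b) = fibz b * lucz a"
proof -
  have "fibz (a + b) - negpow b * fibz (a - b) = fibz b * lucz a"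
  proof (rule uniq[where g="\<lambda>a. fibz (a + b) - negpow b * fibz (a - b)" and h="\<lambda>a. fibz b * lucz a"])
    fix i
    have "fibz (i + b + 2) = fibz (i + b + 1) + fibz (i + b)" by (rule fibz_rec)
    moreover have "fibz (i - b + 2) = fibz (i - b + 1) + fibz (i - b)" by (rule fibz_rec)
    ultimately show "fibz (i + 2 + b) - negpow b * fibz (i + 2 - b) =
         fibz (i + 1 + b) - negpow b * fibz (i + 1 - b) + (fibz (i + b) - negpow b * fibz (i - b))"
      by (simp add: algebra_simps)
  next
    fix i show "fibz b * lucz (i + 2) = fibz b * lucz (i + 1) + fibz b * lucz i"
      using lucz_rec[of i] by (simp add: algebra_simps)
  next
    show "fibz (0 + b) - negpow b * fibz (0 - b) = fibz b * lucz 0"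
      using fibz_negate[of b] by (simp add: lucz_0)
  next
    show "fibz (1 + b) - negpow b * fibz (1 - b) = fibz b * lucz 1"
      using B1[of b] by (simp add: lucz_1 add.commute)
  qed
  then show ?thesis by simp
qed


lemma isum_step: "isum 1 n f = isum 1 (n - 1) f + f n"
proof -
  consider "n \<ge> 1" | "n = 0" | "n \<le> -1" by linarith
  then show ?thesis
  proof cases
    case 1
    have "{1..n} = insert n {1..n-1}" using 1 by auto
    then show ?thesis using 1 by (simp add: isum_def)
  next
    case 2 then show ?thesis by (simp add: isum_def)
  next
    case 3
    have "{n..0} = insert n {n+1..0}" using 3 by auto
    then show ?thesis using 3 by (simp add: isum_def)
  qed
qed

lemma R: "negpow (x - 1) * fibz x * lucz (x + m) = negpow (x - 1) * fibz (2 * x + m) + fibz m"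
proof -
  have a: "fibz x * lucz (x + m) = fibz (x + (x + m)) + negpow (x + m) * fibz (x - (x + m))"
    by (rule A)
  have q: "x + (x + m) = 2 * x + m" "x - (x + m) = - m" by simp_all
  have e: "fibz x * lucz (x + m) = fibz (2 * x + m) + negpow x * (negpow m * fibz (- m))"
    using a unfolding q by (simp add: negpow_add)
  have n1: "negpow (x - 1) * negpow x = -1"
    using negpow_sq[of x] by (simp add: negpow_diff negpow_1 algebra_simps)
  have "negpow (x - 1) * fibz x * lucz (x + m)
      = negpow (x - 1) * fibz (2 * x + m) + (negpow (x - 1) * negpow x) * (negpow m * fibz (- m))"
    unfolding mult.assoc e by (simp add: ring_distribs)
  then show ?thesis unfolding n1 fibz_negate by simp
qed

lemma step_rhs:
  "negpow (m * n - 1) * fibz (m * n) * lucz (m * n + m)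
   - negpow (m * (n - 1) - 1) * fibz (m * (n - 1)) * lucz (m * (n - 1) + m)
   = fibz m * (negpow (m * n - 1) * lucz (2 * m * n))"
proof -
  have r1: "negpow (m * n - 1) * fibz (m * n) * lucz (m * n + m)
     = negpow (m * n - 1) * fibz (2 * m * n + m) + fibz m"
    using R[of "m * n" m] by (simp add: mult.assoc)
  have r2: "negpow (m * (n - 1) - 1) * fibz (m * (n - 1)) * lucz (m * (n - 1) + m)
     = negpow (m * n - 1) * negpow m * fibz (2 * m * n - m) + fibz m"
  proof -
    have q: "m * (n - 1) - 1 = (m * n - 1) - m" "2 * (m * (n - 1)) + m = 2 * m * n - m"
      by (simp_all add: algebra_simps)
    have "negpow (m * n - 1 - m) = negpow (m * n - 1) * negpow m" by (rule negpow_diff)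
    then show ?thesis using R[of "m * (n - 1)" m] unfolding q by simp
  qed
  have b: "fibz (2 * m * n + m) - negpow m * fibz (2 * m * n - m) = fibz m * lucz (2 * m * n)"
    by (rule B)
  show ?thesis unfolding r1 r2
    using b by (simp add: algebra_simps)
qed

theorem lemma3:
  fixes m n :: int
  shows "fibz m * isum 1 n (\<lambda>k. negpow (m * k - 1) * lucz (2 * m * k))
           = negpow (m * n - 1) * fibz (m * n) * lucz (m * n + m)"
proof (induction n rule: int_induct[where k = 0])
  case base
  then show ?case by (simp add: isum_def fibz_0)
next
  case (step1 i)
  have "fibz m * isum 1 (i + 1) (\<lambda>k. negpow (m * k - 1) * lucz (2 * m * k))
     = fibz m * isum 1 i (\<lambda>k. negpow (m * k - 1) * lucz (2 * m * k))
       + fibz m * (negpow (m * (i + 1) - 1) * lucz (2 * m * (i + 1)))"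
    using isum_step[of "i + 1"] by (simp add: algebra_simps)
  then show ?case using step1(2) step_rhs[of m "i + 1"] by simp
next
  case (step2 i)
  have "fibz m * isum 1 i (\<lambda>k. negpow (m * k - 1) * lucz (2 * m * k))
     = fibz m * isum 1 (i - 1) (\<lambda>k. negpow (m * k - 1) * lucz (2 * m * k))
       + fibz m * (negpow (m * i - 1) * lucz (2 * m * i))"
    using isum_step[of i] by (simp add: algebra_simps)
  then show ?case using step2(2) step_rhs[of m i] by simp
qed

end
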